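(* Let $p$ be an odd prime, let $r,n\ge1$ be integers and let $a\in\mathbb{F}_{p^n}^*$. Then the function $f:\mathbb{F}_{p^n}\to\mathbb{F}_p$, $f(x)=\mathrm{Tr}_n(ax^{p^r+1})$, is not near-bent.
   Context: $\epsilon_p=e^{2\pi i/p}$, $\mathrm{Tr}_n$ is the absolute trace $\mathbb{F}_{p^n}\to\mathbb{F}_p$, $\widehat{f}(b)=\sum_{x\in\mathbb{F}_{p^n}}\epsilon_p^{f(x)-\mathrm{Tr}_n(bx)}$. A function $f:\mathbb{F}_{p^n}\to\mathbb{F}_p$ is near-bent if $|\widehat{f}(b)|^2\in\{0,p^{n+1}\}$ for all $b\in\mathbb{F}_{p^n}$. *)

theory Defs
  imports Complex_Main "HOL-Computational_Algebra.Primes"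
begin

text \<open>The finite field F_{p^n} is modelled by a finite field type 'a with
  CHAR('a) = p and CARD('a) = p^n.  The prime field F_p is the image of
  of_nat inside 'a; functions into F_p are functions 'a => 'a with values in it.\<close>

definition abs_trace :: "nat \<Rightarrow> nat \<Rightarrow> 'a::field \<Rightarrow> 'a" where
  "abs_trace p n x = (\<Sum>i<n. x ^ (p ^ i))"

definition fp_rep :: "nat \<Rightarrow> 'a::field \<Rightarrow> nat" where
  "fp_rep p y = (THE k. k < p \<and> of_nat k = y)"

definition eps_pow :: "nat \<Rightarrow> 'a::field \<Rightarrow> complex" where
  "eps_pow p y = cis (2 * pi * real (fp_rep p y) / real p)"

definition walsh :: "nat \<Rightarrow> nat \<Rightarrow> ('a::{field,finite} \<Rightarrow> 'a) \<Rightarrow> 'a \<Rightarrow> complex" where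
  "walsh p n f b = (\<Sum>x\<in>UNIV. eps_pow p (f x - abs_trace p n (b * x)))"

definition near_bent :: "nat \<Rightarrow> nat \<Rightarrow> ('a::{field,finite} \<Rightarrow> 'a) \<Rightarrow> bool" where
  "near_bent p n f \<longleftrightarrow>
     (\<forall>b. (cmod (walsh p n f b))\<^sup>2 \<in> {0, real p ^ (n + 1)})"

end

theory Submission
  imports Defs "HOL-Computational_Algebra.Polynomial" "HOL-Number_Theory.Cong"
begin

lemma pow_card_same:
  fixes x :: "'a :: {field,finite}"
  shows "x ^ card (UNIV :: 'a set) = x"
proof (cases "x = 0")
  case False
  have "x * (\<Prod>y\<in>UNIV-{0}. x * y) = x * x ^ (card (UNIV :: 'a set) - 1) * \<Prod>(UNIV-{0})"
    by (simp add: prod.distrib mult_ac)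
  also have "x * x ^ (card (UNIV :: 'a set) - 1) = x ^ Suc (card (UNIV :: 'a set) - 1)"
    by (subst power_Suc) auto
  also have "Suc (card (UNIV :: 'a set) - 1) = card (UNIV :: 'a set)"
    using finite_UNIV_card_ge_0[where ?'a = 'a] by simp
  also have "(\<Prod>y\<in>UNIV-{0}. x * y) = (\<Prod>y\<in>UNIV-{0}. y)"
    by (rule prod.reindex_bij_witness[of _ "\<lambda>y. y / x" "\<lambda>y. x * y"]) (use False in auto)
  finally show ?thesis
    by simp
qed (use finite_UNIV_card_ge_0[where ?'a = 'a] in auto)

locale ffs =
  fixes p n :: nat and TY :: "'a::{field,finite} itself"
  assumes pr: "prime p" and odd: "odd p" and ch: "CHAR('a) = p"
    and cd: "card (UNIV :: 'a set) = p ^ n" and n1: "n \<ge> 1"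
begin

lemma p2: "p > 2"
  using pr odd prime_ge_2_nat[OF pr] by (cases "p = 2") auto

lemma frob: "((x::'a) + y) ^ (p ^ k) = x ^ (p ^ k) + y ^ (p ^ k)"
  by (rule freshmans_dream') (use pr ch in auto)

lemma frob_sum: "(\<Sum>i\<in>A. (f i :: 'a)) ^ (p ^ k) = (\<Sum>i\<in>A. f i ^ (p ^ k))"
  using p2 by (induct A rule: infinite_finite_induct) (auto simp: frob)

lemma frob_pow_n: "(x::'a) ^ (p ^ n) = x"
  using pow_card_same[of x] cd by simp

lemma frob_pow_nk: "(x::'a) ^ ((p ^ n) ^ k) = x"
proof (induction k)
  case (Suc k)
  have "x ^ ((p ^ n) ^ Suc k) = (x ^ ((p ^ n) ^ k)) ^ (p ^ n)"
    by (simp only: power_Suc2 power_mult)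
  then show ?case using Suc frob_pow_n by simp
qed simp

lemma of_nat_fix: "(of_nat k :: 'a) ^ p = of_nat k"
proof (induction k)
  case 0 then show ?case using p2 by simp
next
  case (Suc k)
  have "(of_nat (Suc k) :: 'a) ^ p = (of_nat k + 1) ^ (p ^ 1)" by (simp add: add.commute)
  also have "\<dots> = of_nat k ^ p + 1" by (subst frob) simp
  finally show ?case using Suc by (simp add: add.commute)
qed

lemma of_nat_inj: "j < p \<Longrightarrow> k < p \<Longrightarrow> (of_nat j :: 'a) = of_nat k \<Longrightarrow> j = k"
  using of_nat_eq_iff_cong_CHAR[where 'a='a, of j k] ch by (simp add: cong_def)

lemma card_Pf: "card ((of_nat :: nat \<Rightarrow> 'a) ` {..<p}) = p"
  by (subst card_image) (auto intro: inj_onI of_nat_inj)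

lemma fix_in_Pf:
  assumes "(y::'a) ^ p = y"
  shows "y \<in> (of_nat :: nat \<Rightarrow> 'a) ` {..<p}"
proof -
  define P :: "'a poly" where "P = monom 1 p - [:0,1:]"
  have pv: "poly P x = x ^ p - x" for x by (simp add: P_def poly_monom)
  have c: "coeff P p = 1" using p2 by (simp add: P_def coeff_pCons split: nat.split)
  hence "P \<noteq> 0" by auto
  hence "card {x. poly P x = 0} \<le> degree P" by (rule card_poly_roots_bound)
  also have "degree P \<le> p" unfolding P_def
    by (rule order.trans[OF degree_diff_le]) (use p2 in \<open>auto simp: degree_monom_eq\<close>)
  finally have le: "card {x. poly P x = 0} \<le> p" .
  have sub: "(of_nat :: nat \<Rightarrow> 'a) ` {..<p} \<subseteq> {x. poly P x = 0}"
    using of_nat_fix by (auto simp: pv)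
  have eq: "(of_nat :: nat \<Rightarrow> 'a) ` {..<p} = {x. poly P x = 0}"
  proof (rule card_subset_eq)
    show "card (of_nat ` {..<p} :: 'a set) = card {x. poly P x = 0}"
      using card_mono[OF _ sub] le card_Pf by simp
  qed (use sub in auto)
  show ?thesis using assms by (subst eq) (simp add: pv)
qed

lemma fp_rep:
  assumes "(y::'a) ^ p = y"
  shows "fp_rep p y < p \<and> of_nat (fp_rep p y) = y"
proof -
  obtain k where k: "k < p" "of_nat k = y" using fix_in_Pf[OF assms] by auto
  have "\<exists>!k. k < p \<and> of_nat k = y" using k of_nat_inj by blast
  thus ?thesis unfolding fp_rep_def by (rule theI')
qed

lemma cis_mod: "cis (2*pi*real m / real p) = cis (2*pi*real (m mod p) / real p)"
proof -
  have m: "real m = real (m mod p) + real p * real (m div p)"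
    by (metis mod_mult_div_eq of_nat_add of_nat_mult)
  have "2*pi*real m / real p = 2*pi*real (m mod p) / real p + 2*pi*real (m div p)"
    using p2 by (simp add: m field_simps)
  hence "cis (2*pi*real m / real p) = cis (2*pi*real (m mod p) / real p) * cis (2*pi*real (m div p))"
    by (simp only: cis_mult)
  moreover have "cis (2*pi*real (m div p)) = 1" by (rule cis_multiple_2pi) simp
  ultimately show ?thesis by simp
qed

lemma pfix_add: "(u::'a) ^ p = u \<Longrightarrow> v ^ p = v \<Longrightarrow> (u + v) ^ p = u + v"
  using frob[of u v 1] by simp

lemma pfix_neg: "(u::'a) ^ p = u \<Longrightarrow> (- u) ^ p = - u"
  using odd by (simp add: power_minus_odd)

lemma pfix_diff: "(u::'a) ^ p = u \<Longrightarrow> v ^ p = v \<Longrightarrow> (u - v) ^ p = u - v"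
  using pfix_add[OF _ pfix_neg, of u v] by simp

lemma e_add:
  assumes "(u::'a) ^ p = u" "v ^ p = v"
  shows "eps_pow p (u + v) = eps_pow p u * eps_pow p v"
proof -
  define ku where "ku = fp_rep p u"
  define kv where "kv = fp_rep p v"
  define ks where "ks = fp_rep p (u + v)"
  have hu: "ku < p" "of_nat ku = u" using fp_rep[OF assms(1)] ku_def by auto
  have hv: "kv < p" "of_nat kv = v" using fp_rep[OF assms(2)] kv_def by auto
  have hs: "ks < p" "of_nat ks = u + v" using fp_rep[OF pfix_add[OF assms]] ks_def by auto
  have "(of_nat ks :: 'a) = of_nat (ku + kv)" using hu hv hs by simp
  hence "[ks = ku + kv] (mod CHAR('a))" by (metis of_nat_eq_iff_cong_CHAR)
  hence "[ks = ku + kv] (mod p)" using ch by simp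
  hence kseq: "ks = (ku + kv) mod p" using hs(1) by (simp add: cong_def)
  have "eps_pow p u * eps_pow p v = cis (2*pi*real (ku+kv) / real p)"
    unfolding eps_pow_def ku_def[symmetric] kv_def[symmetric] by (simp add: cis_mult add_divide_distrib distrib_left)
  also have "\<dots> = eps_pow p (u + v)"
    unfolding eps_pow_def ks_def[symmetric] kseq by (rule cis_mod)
  finally show ?thesis by simp
qed

lemma e_zero: "eps_pow p (0::'a) = 1"
proof -
  have "fp_rep p (0::'a) < p \<and> of_nat (fp_rep p (0::'a)) = (0::'a)"
    using fp_rep[of 0] p2 by simp
  hence "fp_rep p (0::'a) = 0" using of_nat_inj[of "fp_rep p (0::'a)" 0] p2 by auto
  thus ?thesis by (simp add: eps_pow_def)
qed

lemma e_one_iff: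
  assumes "(u::'a) ^ p = u" "eps_pow p u = 1"
  shows "u = 0"
proof -
  define k where "k = fp_rep p u"
  have hk: "k < p" "of_nat k = u" using fp_rep[OF assms(1)] k_def by auto
  have inj: "inj_on (\<lambda>k. cis (2 * pi * real k / real p)) {..<p}"
    using bij_betw_roots_unity[of p] p2 by (auto simp: bij_betw_def)
  have "cis (2 * pi * real k / real p) = cis (2 * pi * real 0 / real p)"
    using assms(2) by (simp add: eps_pow_def k_def)
  hence "k = 0" using inj_onD[OF inj] hk p2 by auto
  thus ?thesis using hk by simp
qed

lemma e_cnj:
  assumes "(u::'a) ^ p = u"
  shows "cnj (eps_pow p u) = eps_pow p (- u)"
proof -
  have "eps_pow p (- u) * eps_pow p u = 1"
    using e_add[OF pfix_neg[OF assms] assms] e_zero by simp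
  moreover have "cnj (eps_pow p u) * eps_pow p u = 1"
    by (simp add: eps_pow_def cis_cnj cis_mult)
  ultimately show ?thesis
    by (metis eps_pow_def cis_neq_zero mult_cancel_right)
qed

lemma char_sum:
  fixes l :: "'a \<Rightarrow> 'a"
  assumes fx: "\<And>y. l y ^ p = l y" and ad: "\<And>x y. l (x + y) = l x + l y"
  shows "(\<Sum>y\<in>UNIV. eps_pow p (l y)) = (if \<forall>y. l y = 0 then of_nat (card (UNIV::'a set)) else 0)"
proof (cases "\<forall>y. l y = 0")
  case True
  thus ?thesis by (simp add: e_zero)
next
  case False
  then obtain y0 where y0: "l y0 \<noteq> 0" by auto
  define S where "S = (\<Sum>y\<in>UNIV. eps_pow p (l y))"
  have "S = (\<Sum>y\<in>UNIV. eps_pow p (l (y + y0)))"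
    unfolding S_def by (rule sum.reindex_bij_witness[of _ "\<lambda>y. y + y0" "\<lambda>y. y - y0"]) auto
  also have "\<dots> = (\<Sum>y\<in>UNIV. eps_pow p (l y) * eps_pow p (l y0))"
    by (simp add: ad e_add fx)
  also have "\<dots> = S * eps_pow p (l y0)" by (simp add: S_def sum_distrib_right)
  finally have "S * (1 - eps_pow p (l y0)) = 0" by (simp add: algebra_simps)
  moreover have "eps_pow p (l y0) \<noteq> 1" using e_one_iff[OF fx] y0 by auto
  ultimately have "S = 0" by simp
  thus ?thesis using False S_def by simp
qed

abbreviation Tr :: "'a \<Rightarrow> 'a" where "Tr \<equiv> abs_trace p n"

lemma tr_add: "Tr (x + y) = Tr x + Tr y"
  by (simp add: abs_trace_def frob sum.distrib)

lemma tr_zero: "Tr 0 = 0"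
  using p2 by (simp add: abs_trace_def power_0_left)

lemma shift_sum: "(\<Sum>i<n. (x::'a) ^ (p ^ Suc i)) = Tr x"
proof -
  have "(\<Sum>i<Suc n. x ^ (p ^ i)) = x ^ (p ^ 0) + (\<Sum>i<n. x ^ (p ^ Suc i))"
    by (rule sum.lessThan_Suc_shift)
  moreover have "(\<Sum>i<Suc n. x ^ (p ^ i)) = (\<Sum>i<n. x ^ (p ^ i)) + x ^ (p ^ n)"
    by simp
  ultimately show ?thesis using frob_pow_n by (simp add: abs_trace_def)
qed

lemma tr_fix: "Tr x ^ p = Tr x"
proof -
  have "Tr x ^ p = Tr x ^ (p ^ 1)" by simp
  also have "\<dots> = (\<Sum>i<n. (x ^ (p ^ i)) ^ (p ^ 1))" unfolding abs_trace_def by (rule frob_sum)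
  also have "\<dots> = (\<Sum>i<n. x ^ (p ^ Suc i))" by (simp add: power_mult[symmetric] mult.commute)
  finally show ?thesis using shift_sum by simp
qed

lemma tr_pow_p: "Tr (x ^ p) = Tr x"
proof -
  have "Tr (x ^ p) = (\<Sum>i<n. x ^ (p ^ Suc i))"
    unfolding abs_trace_def by (simp add: power_mult[symmetric])
  thus ?thesis using shift_sum by simp
qed

lemma tr_frob: "Tr (x ^ (p ^ k)) = Tr x"
proof (induction k)
  case (Suc k)
  have "x ^ (p ^ Suc k) = (x ^ (p ^ k)) ^ p" by (simp add: power_mult[symmetric] mult.commute)
  thus ?case using Suc tr_pow_p by simp
qed simp

lemma tr_nondeg:
  assumes "\<And>c. Tr (u * c) = 0"
  shows "u = 0"
proof (rule ccontr)
  assume u: "u \<noteq> 0"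
  have all0: "Tr c = 0" for c using assms[of "c / u"] u by simp
  define P :: "'a poly" where "P = (\<Sum>i<n. monom 1 (p ^ i))"
  have pv: "poly P x = Tr x" for x by (simp add: P_def poly_sum poly_monom abs_trace_def)
  have pinj: "p ^ i = p ^ j \<longleftrightarrow> i = j" for i j using p2 by (simp add: power_inject_exp)
  have "coeff P (p ^ (n - 1)) = (\<Sum>i<n. if p ^ (n - 1) = p ^ i then 1 else 0)"
    by (simp add: P_def coeff_sum coeff_monom eq_commute)
  also have "\<dots> = (\<Sum>i\<in>{n - 1}. 1)"
    by (rule sum.mono_neutral_cong_right) (use n1 pinj in auto)
  finally have "coeff P (p ^ (n - 1)) = 1" by simp
  hence P0: "P \<noteq> 0" by auto
  have "degree P \<le> p ^ (n - 1)"
  proof (rule degree_le, intro allI impI)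
    fix j assume j: "p ^ (n - 1) < j"
    have "p ^ i \<noteq> j" if "i < n" for i
    proof -
      have "p ^ i \<le> p ^ (n - 1)" using that p2 by (intro power_increasing) auto
      thus ?thesis using j by auto
    qed
    thus "coeff P j = 0" by (simp add: P_def coeff_sum coeff_monom)
  qed
  moreover have "card {x. poly P x = 0} \<le> degree P" by (rule card_poly_roots_bound[OF P0])
  moreover have "{x. poly P x = 0} = UNIV" using all0 pv by auto
  ultimately have "p ^ n \<le> p ^ (n - 1)" using cd by simp
  moreover have "p ^ (n - 1) < p ^ n" using p2 n1 by (intro power_strict_increasing) auto
  ultimately show False by simp
qed

end

locale ffq = ffs p n TY for p n :: nat and TY :: "'a::{field,finite} itself" +
  fixes a :: 'a and r :: nat
  assumes a0: "a \<noteq> 0" and r1: "r \<ge> 1"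
begin

abbreviation q where "q \<equiv> p ^ r"
definition F :: "'a \<Rightarrow> 'a" where "F x = Tr (a * x ^ (q + 1))"
definition B :: "'a \<Rightarrow> 'a \<Rightarrow> 'a" where "B y z = Tr (a * (y ^ q * z + y * z ^ q))"
definition Rad :: "'a set" where "Rad = {z. \<forall>y. B y z = 0}"

lemma F_split: "F (y + z) = F y + F z + B y z"
proof -
  have "(y + z) ^ (q + 1) = (y ^ q + z ^ q) * (y + z)" by (simp add: frob)
  hence "a * (y + z) ^ (q + 1) = a * y ^ (q + 1) + a * z ^ (q + 1) + a * (y ^ q * z + y * z ^ q)"
    by (simp add: algebra_simps)
  thus ?thesis by (simp add: F_def B_def tr_add)
qed

lemma B_add: "B (y1 + y2) z = B y1 z + B y2 z"
proof -
  have "a * ((y1 + y2) ^ q * z + (y1 + y2) * z ^ q) = a * (y1 ^ q * z + y1 * z ^ q) + a * (y2 ^ q * z + y2 * z ^ q)"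
    by (simp add: frob algebra_simps)
  thus ?thesis by (simp add: B_def tr_add)
qed

lemma B_sym: "B y z = B z y"
  by (simp add: B_def algebra_simps)

lemma F_fix: "F x ^ p = F x" by (simp add: F_def tr_fix)
lemma B_fix: "B y z ^ p = B y z" by (simp add: B_def tr_fix)

lemma two_ne0: "(2::'a) \<noteq> 0"
proof
  assume "(2::'a) = 0"
  hence "(of_nat 2 :: 'a) = 0" by simp
  hence "CHAR('a) dvd 2" by (simp only: of_nat_eq_0_iff_char_dvd)
  thus False using ch p2 by (auto dest: dvd_imp_le)
qed

lemma F_Rad: "z \<in> Rad \<Longrightarrow> F z = 0"
proof -
  assume "z \<in> Rad"
  hence "B z z = 0" by (simp add: Rad_def)
  moreover have "B z z = F z + F z"
  proof -
    have e: "a * (z ^ q * z + z * z ^ q) = a * z ^ (q + 1) + a * z ^ (q + 1)" by (simp add: algebra_simps)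
    show ?thesis unfolding B_def F_def e by (rule tr_add)
  qed
  ultimately have "2 * F z = 0" by simp
  thus "F z = 0" using two_ne0 by simp
qed

lemma W_sq:
  defines "W \<equiv> (\<Sum>x\<in>UNIV. eps_pow p (F x))"
  shows "W * cnj W = of_nat (card Rad * p ^ n)"
proof -
  have cW: "cnj W = (\<Sum>y\<in>UNIV. eps_pow p (- F y))"
    by (simp add: W_def e_cnj F_fix)
  have "W * cnj W = (\<Sum>x\<in>UNIV. eps_pow p (F x)) * (\<Sum>y\<in>UNIV. eps_pow p (- F y))"
    using cW W_def by simp
  also have "\<dots> = (\<Sum>x\<in>UNIV. \<Sum>y\<in>UNIV. eps_pow p (F x) * eps_pow p (- F y))"
    by (rule sum_product)
  also have "\<dots> = (\<Sum>y\<in>UNIV. \<Sum>x\<in>UNIV. eps_pow p (F x) * eps_pow p (- F y))"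
    by (rule sum.swap)
  also have "\<dots> = (\<Sum>y\<in>UNIV. \<Sum>z\<in>UNIV. eps_pow p (F (y + z)) * eps_pow p (- F y))"
  proof (rule sum.cong[OF refl])
    fix y
    show "(\<Sum>x\<in>UNIV. eps_pow p (F x) * eps_pow p (- F y)) = (\<Sum>z\<in>UNIV. eps_pow p (F (y + z)) * eps_pow p (- F y))"
      by (rule sum.reindex_bij_witness[of _ "\<lambda>z. y + z" "\<lambda>x. x - y"]) auto
  qed
  also have "\<dots> = (\<Sum>y\<in>UNIV. \<Sum>z\<in>UNIV. eps_pow p (F z) * eps_pow p (B y z))"
  proof (intro sum.cong refl)
    fix y z
    have "eps_pow p (F (y + z)) * eps_pow p (- F y) = eps_pow p (F (y + z) + - F y)"
      by (rule e_add[symmetric]) (simp_all add: F_fix pfix_neg)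
    also have "F (y + z) + - F y = F z + B y z" by (simp add: F_split)
    also have "eps_pow p (F z + B y z) = eps_pow p (F z) * eps_pow p (B y z)"
      by (rule e_add) (simp_all add: F_fix B_fix)
    finally show "eps_pow p (F (y + z)) * eps_pow p (- F y) = eps_pow p (F z) * eps_pow p (B y z)" .
  qed
  also have "\<dots> = (\<Sum>z\<in>UNIV. eps_pow p (F z) * (\<Sum>y\<in>UNIV. eps_pow p (B y z)))"
    by (subst sum.swap) (simp add: sum_distrib_left)
  also have "\<dots> = (\<Sum>z\<in>UNIV. if z \<in> Rad then of_nat (p ^ n) else 0)"
  proof (rule sum.cong[OF refl])
    fix z
    have "(\<Sum>y\<in>UNIV. eps_pow p (B y z)) = (if \<forall>y. B y z = 0 then of_nat (card (UNIV::'a set)) else 0)"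
      by (rule char_sum) (simp_all add: B_fix B_add)
    thus "eps_pow p (F z) * (\<Sum>y\<in>UNIV. eps_pow p (B y z)) = (if z \<in> Rad then of_nat (p ^ n) else 0)"
      using F_Rad[of z] by (simp add: Rad_def cd e_zero)
  qed
  also have "\<dots> = of_nat (card Rad * p ^ n)"
    by (simp add: sum.If_cases)
  finally show ?thesis .
qed

lemma q_pos: "q > 0" using p2 by simp
lemma q_odd: "odd q" using odd by simp

lemma pfix_q: "(w::'a) ^ p = w \<Longrightarrow> w ^ (p ^ k) = w"
proof (induction k)
  case (Suc k)
  have "w ^ (p ^ Suc k) = (w ^ (p ^ k)) ^ p" by (simp only: power_Suc2 power_mult)
  thus ?case using Suc by simp
qed simp

lemma zero_Rad: "0 \<in> Rad"
proof -
  have z: "(0::'a) ^ q = 0" using q_pos by (simp add: power_0_left)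
  show ?thesis by (simp add: Rad_def B_def z tr_zero)
qed

lemma add_Rad:
  assumes "z1 \<in> Rad" "z2 \<in> Rad" shows "z1 + z2 \<in> Rad"
proof -
  have "B y (z1 + z2) = 0" for y
  proof -
    have "B y (z1 + z2) = B (z1 + z2) y" by (rule B_sym)
    also have "\<dots> = B z1 y + B z2 y" by (rule B_add)
    also have "\<dots> = B y z1 + B y z2" by (simp only: B_sym[of z1 y] B_sym[of z2 y])
    finally show ?thesis using assms by (simp add: Rad_def)
  qed
  thus ?thesis by (simp add: Rad_def)
qed

lemma finite_Rad: "finite Rad" by simp

lemma card_Rad_pos: "card Rad > 0"
  using zero_Rad finite_Rad card_gt_0_iff by blast

lemma card_Rad_ne_p: "card Rad \<noteq> p"
proof
  assume cR: "card Rad = p"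
  have "Rad \<noteq> {0}" using cR p2 by auto
  then obtain z0 where z0: "z0 \<in> Rad" "z0 \<noteq> 0" using zero_Rad by blast
  have mulR: "of_nat k * z0 \<in> Rad" for k
    by (induction k) (simp_all add: zero_Rad add_Rad z0(1) distrib_right)
  define S0 where "S0 = (\<lambda>k. of_nat k * z0) ` {..<p}"
  have cS0: "card S0 = p" unfolding S0_def
    by (subst card_image) (auto intro!: inj_onI intro: of_nat_inj simp: z0(2))
  have S0R: "S0 = Rad"
    by (rule card_subset_eq) (use mulR cR cS0 S0_def in auto)
  have Ksub: "c ^ p = c" if c: "c ^ (q * q) = c" for c :: 'a
  proof -
    have "B y (c * z0) = 0" for y
    proof -
      have "B (c ^ q * y) z0 = 0" using z0(1) by (simp add: Rad_def)
      moreover have h: "(c ^ q * y) ^ q = c * y ^ q"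
        using c by (simp add: power_mult_distrib power_mult[symmetric])
      have "a * ((c ^ q * y) ^ q * z0 + c ^ q * y * z0 ^ q) = a * (y ^ q * (c * z0) + y * (c * z0) ^ q)"
        unfolding h by (simp add: power_mult_distrib algebra_simps)
      hence "B (c ^ q * y) z0 = B y (c * z0)" unfolding B_def by (rule arg_cong[where f=Tr])
      ultimately show ?thesis by simp
    qed
    hence "c * z0 \<in> S0" using S0R by (simp add: Rad_def)
    then obtain k where "k < p" "c * z0 = of_nat k * z0" by (auto simp: S0_def)
    hence "c = of_nat k" using z0(2) by simp
    thus ?thesis using of_nat_fix by simp
  qed
  define Q where "Q = q ^ (n - 1)"
  have qQ: "q * Q = (p ^ n) ^ r"
  proof -
    have "q * Q = q ^ n" using n1 by (simp add: Q_def power_Suc[symmetric])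
    thus ?thesis by (simp add: power_mult[symmetric] mult.commute)
  qed
  have Qp: "Q = p ^ (r * (n - 1))" by (simp add: Q_def power_mult)
  have main: "Tr (((a * z0) ^ Q + a * z0 ^ q) * y) = 0" for y
  proof -
    have "Tr (a * (y ^ q * z0)) = Tr ((a * (y ^ q * z0)) ^ Q)"
      unfolding Qp by (rule tr_frob[symmetric])
    also have "(a * (y ^ q * z0)) ^ Q = (a * z0) ^ Q * y ^ (q * Q)"
      by (simp only: power_mult_distrib power_mult[symmetric] mult_ac)
    also have "y ^ (q * Q) = y" unfolding qQ by (rule frob_pow_nk)
    finally have e1: "Tr (a * (y ^ q * z0)) = Tr ((a * z0) ^ Q * y)" .
    have e2: "a * (y ^ q * z0 + y * z0 ^ q) = a * (y ^ q * z0) + a * z0 ^ q * y"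
      by (simp add: algebra_simps)
    have "0 = B y z0" using z0(1) by (simp add: Rad_def)
    also have "\<dots> = Tr (a * (y ^ q * z0)) + Tr (a * z0 ^ q * y)"
      unfolding B_def e2 by (rule tr_add)
    also have "\<dots> = Tr (((a * z0) ^ Q + a * z0 ^ q) * y)"
      unfolding e1 distrib_right by (rule tr_add[symmetric])
    finally show ?thesis by simp
  qed
  have "(a * z0) ^ Q + a * z0 ^ q = 0" by (rule tr_nondeg) (rule main)
  hence X: "(a * z0) ^ Q = - (a * z0 ^ q)" by (simp add: eq_neg_iff_add_eq_0)
  have L: "((a * z0) ^ Q) ^ q = a * z0"
  proof -
    have "((a * z0) ^ Q) ^ q = (a * z0) ^ (q * Q)"
      by (simp only: power_mult[symmetric] mult.commute)
    also have "\<dots> = a * z0" unfolding qQ by (rule frob_pow_nk)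
    finally show ?thesis .
  qed
  have R: "(- (a * z0 ^ q)) ^ q = - (a ^ q * z0 ^ (q * q))"
  proof -
    have "(- (a * z0 ^ q)) ^ q = - ((a * z0 ^ q) ^ q)" using q_odd by (rule power_minus_odd)
    also have "(a * z0 ^ q) ^ q = a ^ q * z0 ^ (q * q)"
      by (simp only: power_mult_distrib power_mult)
    finally show ?thesis .
  qed
  have az: "a * z0 = - (a ^ q * z0 ^ (q * q))" using X L R by metis
  define w where "w = a * z0 ^ (q + 1)"
  have wq: "w ^ q = - w"
  proof -
    have "w ^ q = a ^ q * z0 ^ ((q + 1) * q)"
      by (simp only: w_def power_mult_distrib power_mult)
    also have "(q + 1) * q = q * q + q" by (simp add: algebra_simps)
    also have "a ^ q * z0 ^ (q * q + q) = (a ^ q * z0 ^ (q * q)) * z0 ^ q"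
      by (simp only: power_add mult.assoc)
    also have "\<dots> = - (a * z0) * z0 ^ q" using az by simp
    also have "\<dots> = - w" by (simp add: w_def power_add mult.assoc)
    finally show ?thesis .
  qed
  have "w ^ (q * q) = (w ^ q) ^ q" by (simp only: power_mult)
  also have "\<dots> = w" unfolding wq using q_odd wq by (simp add: power_minus_odd)
  finally have "w ^ p = w" by (rule Ksub)
  hence "w ^ q = w" by (rule pfix_q)
  hence "2 * w = 0" using wq by simp
  hence "w = 0" using two_ne0 by simp
  thus False using a0 z0(2) by (simp add: w_def)
qed

end

theorem theorem3:
  fixes a :: "'a::{field,finite}" and p n r :: nat
  assumes "prime p" and "odd p"
    and "CHAR('a) = p" and "card (UNIV :: 'a set) = p ^ n"
    and "r \<ge> 1" and "n \<ge> 1"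
    and "a \<noteq> 0"
  shows "\<not> near_bent p n (\<lambda>x. abs_trace p n (a * x ^ (p ^ r + 1)))"
proof
  assume nb: "near_bent p n (\<lambda>x. abs_trace p n (a * x ^ (p ^ r + 1)))"
  interpret ffq p n "TYPE('a)" a r by unfold_locales (use assms in auto)
  have fF: "(\<lambda>x. abs_trace p n (a * x ^ (p ^ r + 1))) = F" by (rule ext) (simp add: F_def)
  have W: "walsh p n F 0 = (\<Sum>x\<in>UNIV. eps_pow p (F x))" by (simp add: walsh_def tr_zero)
  have sq: "complex_of_real ((cmod (walsh p n F 0))\<^sup>2) = of_nat (card Rad * p ^ n)"
    unfolding complex_norm_square W by (rule W_sq)
  hence rr: "(cmod (walsh p n F 0))\<^sup>2 = real (card Rad * p ^ n)"
    by (metis of_real_of_nat_eq of_real_eq_iff)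
  from nb fF have "(cmod (walsh p n F 0))\<^sup>2 \<in> {0, real p ^ (n + 1)}" by (simp add: near_bent_def)
  hence "real (card Rad * p ^ n) = 0 \<or> real (card Rad * p ^ n) = real (p ^ (n + 1))"
    using rr by auto
  hence "card Rad * p ^ n = 0 \<or> card Rad * p ^ n = p * p ^ n"
    by (simp only: of_nat_eq_iff of_nat_eq_0_iff power_Suc[symmetric] Suc_eq_plus1 mult.commute)
  moreover have "p ^ n > 0" using p2 by simp
  ultimately have "card Rad = 0 \<or> card Rad = p" by auto
  thus False using card_Rad_pos card_Rad_ne_p by auto
qed

end
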